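(* Fix integers $2\le k\le n'\le n$, put $M=\lceil n/n'\rceil$ and $r=n-(M-1)n'$. Consider the $n'$-grouped $(k,n)$ random-grid sharing of a single secret bit $s$ described in the context, and for a valid partition $\vec\lambda=(\lambda_1,\ldots,\lambda_M)$ let $\#C(\vec\lambda)$ be the number of distinct indices among the selected share bits. Let $\varphi$ be a permutation of $\{1,\ldots,M\}$ such that $\varphi(\vec\lambda)=(\lambda_{\varphi(1)},\ldots,\lambda_{\varphi(M)})$ is also a valid partition. Then for every integer $h$ with $1\le h\le k$, $$\Pr(\#C(\vec\lambda)=h)=\Pr(\#C(\varphi(\vec\lambda))=h).$$
   Context: Basic bits: for a secret bit $s\in\{0,1\}$, $b_1,\ldots,b_{k-1}$ are independent uniform bits and $b_k=s\oplus b_1\oplus\cdots\oplus b_{k-1}$. There is a fixed sequence $c=(c_1,\ldots,c_{n'})\in\{1,\ldots,k\}^{n'}$ in which every value $1,\ldots,k$ occurs (the index pattern of the base $(k,n')$ scheme). The $n$ share bits are arranged in $M=\lceil n/n'\rceil$ groups: groups $1,\ldots,M-1$ have $n'$ positions and group $M$ has $r=n-(M-1)n'$ positions. For each group $j$, an independent uniformly random permutation $\sigma_j$ of $\{1,\ldots,n'\}$ is drawn (independent of the $b_i$), and the $\delta$-th position of group $j$ carries the index $c_{\sigma_j(\delta)}$ and the bit $b_{c_{\sigma_j(\delta)}}$ (for group $M$ only $\delta\le r$ is used). The $\delta$-th position of group $j$ is the share bit of shadow image number $(j-1)n'+\delta$. A valid partition (of $t$) is a vector $\vec\lambda=(\lambda_1,\ldots,\lambda_M)$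 of non-negative integers with $\sum_j\lambda_j=t$, $\max_j\lambda_j\le n'$ and $\lambda_M\le r$. Given $\vec\lambda$, one selects $\lambda_j$ positions from group $j$ for each $j$ (fixed positions; equivalently, uniformly at random without replacement, independently across groups); $C(\vec\lambda)$ is the multiset of indices carried by the selected positions and $\#C(\vec\lambda)$ is the number of distinct elements of $C(\vec\lambda)$. Probabilities are over the random permutations (and the random selection if used). *)

theory Defs
  imports Complex_Main "HOL-Combinatorics.Permutations"
begin

text \<open>Tuples (sigma_1, ..., sigma_M) of permutations of {1..n'}; outside {1..M} the
  tuple is fixed to id so that the set is finite and each tuple is counted once.
  The uniform distribution on this set is the product of M independent uniform permutations.\<close>
definition perm_tuples :: "nat \<Rightarrow> nat \<Rightarrow> (nat \<Rightarrow> nat \<Rightarrow> nat) set" where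
  "perm_tuples M n' = {\<sigma>. (\<forall>j\<in>{1..M}. \<sigma> j permutes {1..n'}) \<and> (\<forall>j. j \<notin> {1..M} \<longrightarrow> \<sigma> j = id)}"

text \<open>Number of distinct indices carried by the selected positions: position delta of
  group j carries index c (sigma_j delta); S j is the set of selected positions of group j.\<close>
definition numC :: "(nat \<Rightarrow> nat) \<Rightarrow> nat \<Rightarrow> (nat \<Rightarrow> nat set) \<Rightarrow> (nat \<Rightarrow> nat \<Rightarrow> nat) \<Rightarrow> nat" where
  "numC c M S \<sigma> = card (\<Union>j\<in>{1..M}. (\<lambda>\<delta>. c (\<sigma> j \<delta>)) ` S j)"

definition prob_numC :: "(nat \<Rightarrow> nat) \<Rightarrow> nat \<Rightarrow> nat \<Rightarrow> (nat \<Rightarrow> nat set) \<Rightarrow> nat \<Rightarrow> real" where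
  "prob_numC c M n' S h =
     real (card {\<sigma> \<in> perm_tuples M n'. numC c M S \<sigma> = h}) / real (card (perm_tuples M n'))"

definition valid_partition :: "nat \<Rightarrow> nat \<Rightarrow> nat \<Rightarrow> nat \<Rightarrow> (nat \<Rightarrow> nat) \<Rightarrow> bool" where
  "valid_partition n' M r t lam \<longleftrightarrow>
     (\<Sum>j\<in>{1..M}. lam j) = t \<and> (\<forall>j\<in>{1..M}. lam j \<le> n') \<and> lam M \<le> r"

definition selection :: "nat \<Rightarrow> nat \<Rightarrow> nat \<Rightarrow> (nat \<Rightarrow> nat) \<Rightarrow> (nat \<Rightarrow> nat set) \<Rightarrow> bool" where
  "selection n' M r lam S \<longleftrightarrow>
     (\<forall>j\<in>{1..M}. S j \<subseteq> {1..n'} \<and> card (S j) = lam j) \<and> S M \<subseteq> {1..r}"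

end

theory Submission
  imports Defs
begin

lemma exists_perm_map:
  fixes A B U :: "nat set"
  assumes "finite U" "A \<subseteq> U" "B \<subseteq> U" "card A = card B"
  shows "\<exists>\<tau>. \<tau> permutes U \<and> \<tau> ` A = B"
proof -
  have fA: "finite A" "finite B" using assms finite_subset by blast+
  obtain f where f: "bij_betw f A B" using finite_same_card_bij fA assms(4) by blast
  have "card (U - A) = card (U - B)"
    using assms fA by (simp add: card_Diff_subset)
  then obtain g where g: "bij_betw g (U - A) (U - B)"
    using finite_same_card_bij assms(1) by blast
  define \<tau> where "\<tau> = (\<lambda>x. if x \<in> A then f x else if x \<in> U then g x else x)"
  have b1: "bij_betw \<tau> A B" using f unfolding \<tau>_def by (rule bij_betw_cong[THEN iffD1, rotated]) auto
  have b2: "bij_betw \<tau> (U - A) (U - B)" using g unfolding \<tau>_def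
    by (rule bij_betw_cong[THEN iffD1, rotated]) auto
  have "bij_betw \<tau> (A \<union> (U - A)) (B \<union> (U - B))"
    by (rule bij_betw_combine[OF b1 b2]) auto
  moreover have "A \<union> (U - A) = U" "B \<union> (U - B) = U" using assms by auto
  ultimately have "bij_betw \<tau> U U" by simp
  hence "\<tau> permutes U" by (rule bij_imp_permutes) (use assms in \<open>auto simp: \<tau>_def\<close>)
  moreover have "\<tau> ` A = B" using b1 by (simp add: bij_betw_def)
  ultimately show ?thesis by blast
qed

lemma finite_perm_tuples: "finite (perm_tuples M n')"
proof -
  let ?f = "\<lambda>\<sigma>. restrict \<sigma> {1..M}"
  have "inj_on ?f (perm_tuples M n')"
  proof (rule inj_onI)
    fix x y assume x: "x \<in> perm_tuples M n'" and y: "y \<in> perm_tuples M n'" and e: "?f x = ?f y"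
    show "x = y"
    proof
      fix j show "x j = y j"
        using x y e by (cases "j \<in> {1..M}") (auto simp: perm_tuples_def fun_eq_iff restrict_def split: if_splits)
    qed
  qed
  moreover have "?f ` perm_tuples M n' \<subseteq> PiE {1..M} (\<lambda>_. {p. p permutes {1..n'}})"
    by (auto simp: perm_tuples_def)
  moreover have "finite (PiE {1..M} (\<lambda>_. {p. p permutes {1..n'}}))"
    by (intro finite_PiE) (auto intro: finite_permutations)
  ultimately show ?thesis using finite_imageD finite_subset by blast
qed

lemma inj_F:
  assumes phi: "\<phi> permutes {1..M}"
  and tau: "\<And>j. j\<in>{1..M} \<Longrightarrow> \<tau> j permutes {1..n'} \<and> \<tau> j ` S' j = S (\<phi> j)"
  and F_def: "F = (\<lambda>\<sigma> j. if j \<in> {1..M} then \<sigma> (\<phi> j) \<circ> \<tau> j else id)"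
  shows "inj_on F (perm_tuples M n')"
  proof (rule inj_onI)
    fix x y assume x: "x \<in> perm_tuples M n'" and y: "y \<in> perm_tuples M n'" and e: "F x = F y"
    show "x = y"
    proof
      fix i show "x i = y i"
      proof (cases "i \<in> {1..M}")
        case True
        define j where "j = inv \<phi> i"
        have j: "j \<in> {1..M}" "\<phi> j = i"
        proof -
          show "j \<in> {1..M}" unfolding j_def permutes_in_image[OF permutes_inv[OF phi]] by (rule True)
          show "\<phi> j = i" unfolding j_def by (rule permutes_inverses(1)[OF phi])
        qed
        have "F x j = F y j" using e by (rule fun_cong)
        hence e2: "x (\<phi> j) \<circ> \<tau> j = y (\<phi> j) \<circ> \<tau> j" using j(1) unfolding F_def by (simp only: if_True)
        have "surj (\<tau> j)" by (rule permutes_surj[OF conjunct1[OF tau[OF j(1)]]])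
        show ?thesis
        proof
          fix z
          obtain w where "z = \<tau> j w" using \<open>surj (\<tau> j)\<close> by (rule surjE)
          then show "x i z = y i z" using fun_cong[OF e2, of w] j(2) by (simp only: o_apply)
        qed
      next
        case False then show ?thesis using x y by (simp add: perm_tuples_def)
      qed
    qed
  qed

lemma key_le:
  assumes phi: "\<phi> permutes {1..M}"
    and sub: "\<And>j. j \<in> {1..M} \<Longrightarrow> S' j \<subseteq> {1..n'} \<and> S (\<phi> j) \<subseteq> {1..n'} \<and> card (S' j) = card (S (\<phi> j))"
  shows "card {\<sigma> \<in> perm_tuples M n'. numC c M S \<sigma> = h} \<le> card {\<sigma> \<in> perm_tuples M n'. numC c M S' \<sigma> = h}"
proof -
  have "\<forall>j\<in>{1..M}. \<exists>\<tau>. \<tau> permutes {1..n'} \<and> \<tau> ` S' j = S (\<phi> j)"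
    using sub exists_perm_map[of "{1..n'}"] by auto
  then obtain \<tau> where tau: "\<And>j. j\<in>{1..M} \<Longrightarrow> \<tau> j permutes {1..n'} \<and> \<tau> j ` S' j = S (\<phi> j)"
    by metis
  define F where "F = (\<lambda>\<sigma> j. if j \<in> {1..M} then \<sigma> (\<phi> j) \<circ> \<tau> j else id)"
  have phiM: "\<And>j. j \<in> {1..M} \<Longrightarrow> \<phi> j \<in> {1..M}"
    using permutes_in_image[OF phi] by blast
  have inPT: "F \<sigma> \<in> perm_tuples M n'" if "\<sigma> \<in> perm_tuples M n'" for \<sigma>
    using that tau phiM by (auto simp: perm_tuples_def F_def intro!: permutes_compose)
  have numeq: "numC c M S' (F \<sigma>) = numC c M S \<sigma>" for \<sigma>
  proof -
    have "(\<Union>j\<in>{1..M}. (\<lambda>\<delta>. c (F \<sigma> j \<delta>)) ` S' j) = (\<Union>j\<in>{1..M}. (\<lambda>\<delta>. c (\<sigma> (\<phi> j) \<delta>)) ` S (\<phi> j))"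
    proof (rule SUP_cong[OF refl])
      fix j assume j: "j \<in> {1..M}"
      have "(\<lambda>\<delta>. c (F \<sigma> j \<delta>)) ` S' j = (\<lambda>\<delta>. c (\<sigma> (\<phi> j) \<delta>)) ` (\<tau> j ` S' j)"
        using j by (auto simp: F_def image_image)
      then show "(\<lambda>\<delta>. c (F \<sigma> j \<delta>)) ` S' j = (\<lambda>\<delta>. c (\<sigma> (\<phi> j) \<delta>)) ` S (\<phi> j)"
        using tau[OF j] by simp
    qed
    also have "\<dots> = (\<Union>i\<in>\<phi> ` {1..M}. (\<lambda>\<delta>. c (\<sigma> i \<delta>)) ` S i)"
      by (simp add: image_image)
    also have "\<dots> = (\<Union>i\<in>{1..M}. (\<lambda>\<delta>. c (\<sigma> i \<delta>)) ` S i)"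
      using permutes_image[OF phi] by simp
    finally show ?thesis by (simp add: numC_def)
  qed
  have inj: "inj_on F (perm_tuples M n')"
    by (rule inj_F[OF phi tau F_def])
  have img: "F ` {\<sigma> \<in> perm_tuples M n'. numC c M S \<sigma> = h} \<subseteq> {\<sigma> \<in> perm_tuples M n'. numC c M S' \<sigma> = h}"
    using inPT numeq by auto
  have fin: "finite {\<sigma> \<in> perm_tuples M n'. numC c M S' \<sigma> = h}"
    using finite_perm_tuples by simp
  have inj2: "inj_on F {\<sigma> \<in> perm_tuples M n'. numC c M S \<sigma> = h}"
    by (rule inj_on_subset[OF inj]) blast
  show ?thesis by (rule card_inj_on_le[OF inj2 img fin])
qed

theorem lemma3:
  fixes k n' n M r t h :: nat and c :: "nat \<Rightarrow> nat"
    and lam :: "nat \<Rightarrow> nat" and \<phi> :: "nat \<Rightarrow> nat" and S S' :: "nat \<Rightarrow> nat set"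
  assumes "2 \<le> k" "k \<le> n'" "n' \<le> n"
    and M_def: "M = nat \<lceil>real n / real n'\<rceil>"
    and r_def: "r = n - (M - 1) * n'"
    and c_vals: "c ` {1..n'} = {1..k}"
    and valid: "valid_partition n' M r t lam"
    and perm: "\<phi> permutes {1..M}"
    and valid_perm: "valid_partition n' M r t (lam \<circ> \<phi>)"
    and sel: "selection n' M r lam S"
    and sel_perm: "selection n' M r (lam \<circ> \<phi>) S'"
    and "1 \<le> h" "h \<le> k"
  shows "prob_numC c M n' S h = prob_numC c M n' S' h"
proof -
  have phiM: "\<And>j. j \<in> {1..M} \<Longrightarrow> \<phi> j \<in> {1..M}"
    using permutes_in_image[OF perm] by blast
  have iphiM: "\<And>j. j \<in> {1..M} \<Longrightarrow> inv \<phi> j \<in> {1..M}"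
    using permutes_in_image[OF permutes_inv[OF perm]] by blast
  have le1: "card {\<sigma> \<in> perm_tuples M n'. numC c M S \<sigma> = h} \<le> card {\<sigma> \<in> perm_tuples M n'. numC c M S' \<sigma> = h}"
    by (rule key_le[OF perm]) (use sel sel_perm phiM in \<open>auto simp: selection_def\<close>)
  have le2: "card {\<sigma> \<in> perm_tuples M n'. numC c M S' \<sigma> = h} \<le> card {\<sigma> \<in> perm_tuples M n'. numC c M S \<sigma> = h}"
  proof (rule key_le[OF permutes_inv[OF perm]])
    fix j assume j: "j \<in> {1..M}"
    have "\<phi> (inv \<phi> j) = j" using perm by (simp add: permutes_inverses)
    then show "S j \<subseteq> {1..n'} \<and> S' (inv \<phi> j) \<subseteq> {1..n'} \<and> card (S j) = card (S' (inv \<phi> j))"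
      using sel sel_perm j iphiM[OF j] by (auto simp: selection_def)
  qed
  show ?thesis unfolding prob_numC_def using le1 le2 by simp
qed

end
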